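(* Let $d\in\mathbb{D}$ be such that, for every formula $\varphi$ of Hennessy–Milner logic, $(\mathbb{D},d)\models^c\varphi$ implies $(\mathbb{D},d)\models^a\varphi$. Then $d\in\max(\mathbb{D})$.
   Context: Fix a finite set $\mathrm{Act}$ of events. For a dcpo $D$, $K(D)$ denotes its compact elements; a bifinite (SFP) domain is an algebraic dcpo in which for each finite $F\subseteq K(D)$ iterated minimal-upper-bound sets are finite and in $K(D)$ and every upper bound of $F$ is above a minimal upper bound. Scott topology: sets $U={\uparrow}(U\cap K(D))$; Lawson topology generated by ${\uparrow}k\setminus{\uparrow}l$, $k,l\in K(D)$. Mixed powerdomain $\mathcal{M}(D)$: pairs $(L,U)$, $L$ Scott-closed, $U$ Lawson-closed upper, $L={\downarrow}(L\cap U)$, ordered by $L\subseteq L'$ and $U'\subseteq U$. $\mathbb{D}$ is the initial solution over bifinite domains of $\mathbb{D}\cong\prod_{\alpha\in\mathrm{Act}}\mathcal{M}(\mathbb{D})$, $d=((L^d_\alpha,U^d_\alpha))_\alpha$, viewed as a mixed transition system $(\mathbb{D},\mathbb{R}^a,\mathbb{R}^c)$ with $(d,\alpha,d')\in\mathbb{R}^a$ iff $d'\in L^d_\alpha$ and $(d,\alpha,d')\in\mathbb{R}^c$ iff $d'\in U^d_\alpha$. $\max(\mathbb{D})$ is the set of maximal elements. Hennessy–Milner logic: $\varphi::=tt\mid\neg\varphi\mid\langle\alpha\rangle\varphi\mid\varphi\wedge\varphi$. For $m\in\{a,c\}$ ($\neg a=c$, $\neg c=a$): $(\mathbb{D},d)\models^m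 tt$; $(\mathbb{D},d)\models^m\neg\varphi$ iff not $(\mathbb{D},d)\models^{\neg m}\varphi$; $(\mathbb{D},d)\models^m\langle\alpha\rangle\varphi$ iff $(\mathbb{D},d')\models^m\varphi$ for some $(d,\alpha,d')\in\mathbb{R}^m$; $\models^m\varphi\wedge\psi$ iff $\models^m\varphi$ and $\models^m\psi$. *)

theory Defs
  imports Complex_Main "HOL-Library.FuncSet"
begin

definition up :: "'d::order set \<Rightarrow> 'd set" where
  "up A = {x. \<exists>a\<in>A. a \<le> x}"

definition down :: "'d::order set \<Rightarrow> 'd set" where
  "down A = {x. \<exists>a\<in>A. x \<le> a}"

definition is_lub :: "'d::order set \<Rightarrow> 'd \<Rightarrow> bool" where
  "is_lub A s \<longleftrightarrow> (\<forall>x\<in>A. x \<le> s) \<and> (\<forall>u. (\<forall>x\<in>A. x \<le> u) \<longrightarrow> s \<le> u)"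

definition directed :: "'d::order set \<Rightarrow> bool" where
  "directed A \<longleftrightarrow> A \<noteq> {} \<and> (\<forall>x\<in>A. \<forall>y\<in>A. \<exists>z\<in>A. x \<le> z \<and> y \<le> z)"

definition dcpo :: "'d::order itself \<Rightarrow> bool" where
  "dcpo _ \<longleftrightarrow> (\<forall>A::'d set. directed A \<longrightarrow> (\<exists>s. is_lub A s))"

definition compact :: "'d::order \<Rightarrow> bool" where
  "compact k \<longleftrightarrow> (\<forall>A s. directed A \<and> is_lub A s \<and> k \<le> s \<longrightarrow> (\<exists>a\<in>A. k \<le> a))"

definition KD :: "'d::order set" where
  "KD = {k. compact k}"

definition algebraic :: "'d::order itself \<Rightarrow> bool" where
  "algebraic T \<longleftrightarrow> dcpo T \<and>
     (\<forall>x::'d. directed {k\<in>KD. k \<le> x} \<and> is_lub {k\<in>KD. k \<le> x} x)"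

definition is_ub :: "'d::order set \<Rightarrow> 'd \<Rightarrow> bool" where
  "is_ub F x \<longleftrightarrow> (\<forall>y\<in>F. y \<le> x)"

definition mub :: "'d::order set \<Rightarrow> 'd set" where
  "mub F = {x. is_ub F x \<and> (\<forall>y. is_ub F y \<and> y \<le> x \<longrightarrow> y = x)}"

definition mubstep :: "'d::order set \<Rightarrow> 'd set" where
  "mubstep F = \<Union>{mub G | G. G \<subseteq> F}"

definition mubclosure :: "'d::order set \<Rightarrow> 'd set" where
  "mubclosure F = (\<Union>n. (mubstep ^^ n) F)"

definition bifinite :: "'d::order itself \<Rightarrow> bool" where
  "bifinite T \<longleftrightarrow> algebraic T \<and>
     (\<forall>F::'d set. finite F \<and> F \<subseteq> KD \<longrightarrow>
        finite (mubclosure F) \<and> mubclosure F \<subseteq> KD \<and>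
        (\<forall>x. is_ub F x \<longrightarrow> (\<exists>m\<in>mub F. m \<le> x)))"

definition scott_open :: "'d::order set \<Rightarrow> bool" where
  "scott_open U \<longleftrightarrow> U = up (U \<inter> KD)"

definition scott_closed :: "'d::order set \<Rightarrow> bool" where
  "scott_closed L \<longleftrightarrow> scott_open (- L)"

definition scott_closure :: "'d::order set \<Rightarrow> 'd set" where
  "scott_closure A = \<Inter>{C. scott_closed C \<and> A \<subseteq> C}"

definition lawson_subbasis :: "'d::order set set" where
  "lawson_subbasis = {up {k} - up {l} | k l. k \<in> KD \<and> l \<in> KD}"

definition lawson_closed :: "'d::order set \<Rightarrow> bool" where
  "lawson_closed C \<longleftrightarrow> generate_topology lawson_subbasis (- C)"

definition upper :: "'d::order set \<Rightarrow> bool" where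
  "upper U \<longleftrightarrow> up U = U"

definition mixed_pd :: "('d::order set \<times> 'd set) set" where
  "mixed_pd = {(L, U). scott_closed L \<and> lawson_closed U \<and> upper U \<and> L = down (L \<inter> U)}"

definition mixed_le :: "('d::order set \<times> 'd set) \<Rightarrow> ('d set \<times> 'd set) \<Rightarrow> bool" where
  "mixed_le p q \<longleftrightarrow> fst p \<subseteq> fst q \<and> snd q \<subseteq> snd p"

definition prod_pd :: "'a set \<Rightarrow> ('a \<Rightarrow> 'd::order set \<times> 'd set) set" where
  "prod_pd Act = (\<Pi>\<^sub>E \<alpha>\<in>Act. mixed_pd)"

definition prod_le :: "'a set \<Rightarrow> ('a \<Rightarrow> 'd::order set \<times> 'd set) \<Rightarrow> ('a \<Rightarrow> 'd set \<times> 'd set) \<Rightarrow> bool" where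
  "prod_le Act p q \<longleftrightarrow> (\<forall>\<alpha>\<in>Act. mixed_le (p \<alpha>) (q \<alpha>))"

definition mixed_map :: "('d::order \<Rightarrow> 'd) \<Rightarrow> ('d set \<times> 'd set) \<Rightarrow> ('d set \<times> 'd set)" where
  "mixed_map f p = (scott_closure (f ` fst p), up (f ` snd p))"

definition prod_map :: "'a set \<Rightarrow> ('d::order \<Rightarrow> 'd) \<Rightarrow> ('a \<Rightarrow> 'd set \<times> 'd set) \<Rightarrow> ('a \<Rightarrow> 'd set \<times> 'd set)" where
  "prod_map Act f p = (\<lambda>\<alpha>\<in>Act. mixed_map f (p \<alpha>))"

definition is_solution :: "'a set \<Rightarrow> ('d::order \<Rightarrow> ('a \<Rightarrow> 'd set \<times> 'd set)) \<Rightarrow> bool" where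
  "is_solution Act i \<longleftrightarrow> bij_betw i UNIV (prod_pd Act) \<and>
     (\<forall>x y. x \<le> y \<longleftrightarrow> prod_le Act (i x) (i y))"

definition dbot :: "'d::order" where
  "dbot = (THE b. \<forall>x. b \<le> x)"

primrec approx :: "'a set \<Rightarrow> ('d::order \<Rightarrow> ('a \<Rightarrow> 'd set \<times> 'd set)) \<Rightarrow> nat \<Rightarrow> 'd \<Rightarrow> 'd" where
  "approx Act i 0 = (\<lambda>_. dbot)"
| "approx Act i (Suc n) = (\<lambda>x. inv i (prod_map Act (approx Act i n) (i x)))"

text \<open>initial solution (characterised by minimal invariance: id = lub of the approximations)\<close>
definition is_initial_solution :: "'a set \<Rightarrow> ('d::order \<Rightarrow> ('a \<Rightarrow> 'd set \<times> 'd set)) \<Rightarrow> bool" where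
  "is_initial_solution Act i \<longleftrightarrow> finite Act \<and> bifinite TYPE('d) \<and> is_solution Act i \<and>
     (\<forall>x. is_lub (range (\<lambda>n. approx Act i n x)) x)"

datatype (acts: 'a) hml = TT | Neg "'a hml" | Dia 'a "'a hml" | Conj "'a hml" "'a hml"

datatype mode = May | Must  \<comment> \<open>May = a (admissible), Must = c (compulsory)\<close>

fun dual :: "mode \<Rightarrow> mode" where
  "dual May = Must" | "dual Must = May"

definition trans :: "('d \<Rightarrow> ('a \<Rightarrow> 'd set \<times> 'd set)) \<Rightarrow> mode \<Rightarrow> 'd \<Rightarrow> 'a \<Rightarrow> 'd \<Rightarrow> bool" where
  "trans i m d \<alpha> d' \<longleftrightarrow> (case m of May \<Rightarrow> d' \<in> fst (i d \<alpha>) | Must \<Rightarrow> d' \<in> snd (i d \<alpha>))"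

fun sat :: "('d \<Rightarrow> ('a \<Rightarrow> 'd set \<times> 'd set)) \<Rightarrow> mode \<Rightarrow> 'd \<Rightarrow> 'a hml \<Rightarrow> bool" where
  "sat i m d TT = True"
| "sat i m d (Neg \<phi>) = (\<not> sat i (dual m) d \<phi>)"
| "sat i m d (Dia \<alpha> \<phi>) = (\<exists>d'. trans i m d \<alpha> d' \<and> sat i m d' \<phi>)"
| "sat i m d (Conj \<phi> \<psi>) = (sat i m d \<phi> \<and> sat i m d \<psi>)"

definition maximal :: "'d::order \<Rightarrow> bool" where
  "maximal d \<longleftrightarrow> (\<forall>y. d \<le> y \<longrightarrow> y = d)"

end

theory Submission
  imports Defs
begin

fun conjs :: "'a hml list \<Rightarrow> 'a hml" where
  "conjs [] = TT" | "conjs (\<phi> # xs) = Conj \<phi> (conjs xs)"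

lemma sat_conjs: "sat i m x (conjs xs) \<longleftrightarrow> (\<forall>\<phi>\<in>set xs. sat i m x \<phi>)"
  by (induct xs) auto

lemma acts_conjs: "acts (conjs xs) = \<Union>(acts ` set xs)"
  by (induct xs) auto

definition BC :: "'a hml set \<Rightarrow> 'a hml" where
  "BC S = conjs (SOME xs. set xs = S)"

lemma BC_set: "finite S \<Longrightarrow> set (SOME xs. set xs = S) = S"
  by (rule someI_ex) (rule finite_list)

lemma sat_BC: "finite S \<Longrightarrow> sat i m x (BC S) \<longleftrightarrow> (\<forall>\<phi>\<in>S. sat i m x \<phi>)"
  unfolding BC_def by (simp add: sat_conjs BC_set)

lemma acts_BC: "finite S \<Longrightarrow> acts (BC S) = \<Union>(acts ` S)"
  unfolding BC_def by (simp add: acts_conjs BC_set)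

locale isol =
  fixes Act :: "'a set" and i :: "'d::order \<Rightarrow> ('a \<Rightarrow> 'd set \<times> 'd set)"
  assumes init: "is_initial_solution Act i"
begin

lemma finAct: "finite Act" using init unfolding is_initial_solution_def by auto
lemma sol: "is_solution Act i" using init unfolding is_initial_solution_def by auto
lemma lub: "is_lub (range (\<lambda>n. approx Act i n x)) x" using init unfolding is_initial_solution_def by auto
lemma alg: "directed {k\<in>KD. k \<le> x} \<and> is_lub {k\<in>KD. k \<le> x} (x::'d)"
  using init unfolding is_initial_solution_def bifinite_def algebraic_def by auto

lemma le_iff: "x \<le> y \<longleftrightarrow> prod_le Act (i x) (i y)"
  using sol unfolding is_solution_def by auto

lemma i_in: "i x \<in> prod_pd Act"
  using sol unfolding is_solution_def bij_betw_def by auto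

lemma i_inv: "p \<in> prod_pd Act \<Longrightarrow> i (inv i p) = p"
  using sol unfolding is_solution_def bij_betw_def by (metis f_inv_into_f)

lemma comp_in: "\<alpha> \<in> Act \<Longrightarrow> i x \<alpha> \<in> mixed_pd"
  using i_in unfolding prod_pd_def by auto

lemma le_comp: "x \<le> y \<Longrightarrow> \<alpha> \<in> Act \<Longrightarrow> fst (i x \<alpha>) \<subseteq> fst (i y \<alpha>) \<and> snd (i y \<alpha>) \<subseteq> snd (i x \<alpha>)"
  using le_iff unfolding prod_le_def mixed_le_def by auto

lemma alg_below: "\<not> x \<le> y \<Longrightarrow> \<exists>k\<in>KD. k \<le> x \<and> \<not> k \<le> (y::'d)"
proof (rule ccontr)
  assume a: "\<not> x \<le> y" "\<not> (\<exists>k\<in>KD. k \<le> x \<and> \<not> k \<le> y)"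
  then have "\<forall>k\<in>{k\<in>KD. k \<le> x}. k \<le> y" by blast
  moreover have "is_lub {k\<in>KD. k \<le> x} x" using alg[of x] by blast
  ultimately have "x \<le> y" unfolding is_lub_def by blast
  then show False using a by blast
qed

lemma compact_above: "finite F \<Longrightarrow> F \<subseteq> {k\<in>KD. k \<le> y} \<Longrightarrow> \<exists>k\<in>KD. k \<le> (y::'d) \<and> (\<forall>f\<in>F. f \<le> k)"
proof (induction F rule: finite_induct)
  case empty
  then show ?case using alg[of y] unfolding directed_def by auto
next
  case (insert a F)
  then obtain k where k: "k\<in>KD" "k \<le> y" "\<forall>f\<in>F. f \<le> k" by auto
  have "a \<in> {k\<in>KD. k \<le> y}" "k \<in> {k\<in>KD. k \<le> y}" using insert k by auto
  moreover have "directed {k\<in>KD. k \<le> y}" using alg[of y] by blast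
  ultimately obtain z where z: "z \<in> {k\<in>KD. k \<le> y}" "a \<le> z" "k \<le> z"
    unfolding directed_def by blast
  have "\<forall>f\<in>insert a F. f \<le> z"
  proof
    fix f assume "f \<in> insert a F"
    then show "f \<le> z"
    proof
      assume "f = a" then show ?thesis using z by simp
    next
      assume "f \<in> F" then have "f \<le> k" using k by blast
      then show ?thesis using z(3) by (rule order.trans)
    qed
  qed
  then show ?case using z(1) by blast
qed

lemma sc_down: "scott_closed C \<Longrightarrow> y \<in> C \<Longrightarrow> x \<le> y \<Longrightarrow> x \<in> (C::'d set)"
proof (rule ccontr)
  assume a: "scott_closed C" "y \<in> C" "x \<le> y" "x \<notin> C"
  then have eq: "- C = up (- C \<inter> KD)" unfolding scott_closed_def scott_open_def by auto
  then have "x \<in> up (- C \<inter> KD)" using a by auto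
  then obtain k where k: "k \<in> - C \<inter> KD" "k \<le> x" unfolding up_def by auto
  have "k \<le> y" using k(2) a(3) by (rule order.trans)
  then have "y \<in> up (- C \<inter> KD)" using k(1) unfolding up_def by blast
  then show False using eq a by auto
qed

lemma down_fin_closed: "finite A \<Longrightarrow> scott_closed (down (A::'d set))"
  unfolding scott_closed_def scott_open_def
proof
  assume fin: "finite A"
  show "- down A \<subseteq> up (- down A \<inter> KD)"
  proof
    fix y assume y: "y \<in> - down A"
    have "\<forall>a\<in>A. \<exists>k\<in>KD. k \<le> y \<and> \<not> k \<le> a" using y alg_below unfolding down_def by auto
    then obtain g where g: "\<forall>a\<in>A. g a \<in> KD \<and> g a \<le> y \<and> \<not> g a \<le> a" by metis
    have "finite (g ` A)" using fin by auto
    then obtain k where k: "k\<in>KD" "k \<le> y" "\<forall>f\<in>g ` A. f \<le> k"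
      using compact_above[of "g ` A" y] g by auto
    have "k \<in> - down A"
    proof
      assume "k \<in> down A"
      then obtain a where a: "a \<in> A" "k \<le> a" unfolding down_def by auto
      have "g a \<le> k" using k(3) a(1) by auto
      then have "g a \<le> a" using a(2) by (rule order.trans)
      then show False using g a(1) by auto
    qed
    then show "y \<in> up (- down A \<inter> KD)" using k unfolding up_def by auto
  qed
  show "up (- down A \<inter> KD) \<subseteq> - down A"
  proof
    fix x assume "x \<in> up (- down A \<inter> KD)"
    then obtain k where k: "k \<in> - down A" "k \<le> x" unfolding up_def by auto
    show "x \<in> - down A"
    proof
      assume "x \<in> down A"
      then obtain a where a: "a \<in> A" "x \<le> a" unfolding down_def by auto
      have "k \<le> a" using k(2) a(2) by (rule order.trans)
      then show False using k(1) a(1) unfolding down_def by auto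
    qed
  qed
qed

lemma closure_fin: "finite A \<Longrightarrow> scott_closure A = down (A::'d set)"
proof
  assume f: "finite A"
  show "scott_closure A \<subseteq> down A"
    unfolding scott_closure_def using down_fin_closed[OF f]
    by (auto simp: down_def)
  show "down A \<subseteq> scott_closure A"
  proof
    fix x assume "x \<in> down A"
    then obtain a where a: "a \<in> A" "x \<le> a" unfolding down_def by auto
    show "x \<in> scott_closure A" unfolding scott_closure_def
    proof (rule InterI, clarify)
      fix C assume "scott_closed C" "A \<subseteq> C"
      then show "x \<in> C" using sc_down[of C a x] a by auto
    qed
  qed
qed

lemma closure_sub: "scott_closure A \<subseteq> C \<longleftrightarrow> A \<subseteq> C" if "scott_closed C"
  using that unfolding scott_closure_def by blast

lemma ex_bot: "\<exists>b::'d. \<forall>x. b \<le> x"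
proof -
  have KDne: "\<exists>k\<in>KD. k \<le> x" for x :: 'd using alg[of x] unfolding directed_def by auto
  have "({}, UNIV) \<in> (mixed_pd :: ('d set \<times> 'd set) set)"
    unfolding mixed_pd_def scott_closed_def scott_open_def lawson_closed_def upper_def
  proof (simp, intro conjI)
    show "UNIV = up (KD::'d set)" using KDne unfolding up_def by auto
    show "generate_topology lawson_subbasis ({}::'d set)"
      using generate_topology.UN[of "{}"] by auto
    show "up (UNIV::'d set) = UNIV" unfolding up_def by auto
    show "{} = down ({}::'d set)" unfolding down_def by auto
  qed
  then have p: "(\<lambda>\<alpha>\<in>Act. ({}, UNIV)) \<in> (prod_pd Act :: ('a \<Rightarrow> 'd set \<times> 'd set) set)" unfolding prod_pd_def by auto
  show ?thesis
    apply (rule exI[of _ "inv i (\<lambda>\<alpha>\<in>Act. ({}, UNIV))"])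
    using i_inv[OF p] unfolding le_iff prod_le_def mixed_le_def by auto
qed

lemma dbot_le: "dbot \<le> (x::'d)"
proof -
  obtain b :: 'd where b: "\<forall>x. b \<le> x" using ex_bot by auto
  have "dbot = b" unfolding dbot_def
  proof (rule the_equality)
    show "\<forall>x. b \<le> x" by (rule b)
  next
    fix c :: 'd assume "\<forall>x. c \<le> x"
    then have "c \<le> b" "b \<le> c" using b by auto
    then show "c = b" by (rule order.antisym)
  qed
  then show ?thesis using b by auto
qed

lemma dbot_KD: "(dbot::'d) \<in> KD"
  unfolding KD_def compact_def mem_Collect_eq
proof (intro allI impI)
  fix A :: "'d set" and s assume "directed A \<and> is_lub A s \<and> dbot \<le> s"
  then obtain a where "a \<in> A" unfolding directed_def by blast
  then show "\<exists>a\<in>A. dbot \<le> a" using dbot_le by blast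
qed

lemma up_fin_lawson: "finite F \<Longrightarrow> lawson_closed (up (F::'d set))"
  unfolding lawson_closed_def
proof (induction F rule: finite_induct)
  case empty
  then show ?case by (simp add: up_def generate_topology.UNIV)
next
  case (insert x F)
  have "- up (insert x F) = (- up {x}) \<inter> (- up F)" unfolding up_def by auto
  moreover have "- up {x} = \<Union>{up {dbot} - up {k} | k. k \<in> KD \<and> k \<le> x}"
  proof
    show "- up {x} \<subseteq> \<Union>{up {dbot} - up {k} | k. k \<in> KD \<and> k \<le> x}"
    proof
      fix y assume "y \<in> - up {x}"
      then have "\<not> x \<le> y" unfolding up_def by auto
      then obtain k where "k\<in>KD" "k \<le> x" "\<not> k \<le> y" using alg_below by blast
      then show "y \<in> \<Union>{up {dbot} - up {k} | k. k \<in> KD \<and> k \<le> x}"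
        unfolding up_def using dbot_le by blast
    qed
    show "\<Union>{up {dbot} - up {k} | k. k \<in> KD \<and> k \<le> x} \<subseteq> - up {x}"
    proof
      fix y assume "y \<in> \<Union>{up {dbot} - up {k} | k. k \<in> KD \<and> k \<le> x}"
      then obtain k where k: "k \<le> x" "\<not> k \<le> y" unfolding up_def by auto
      show "y \<in> - up {x}"
      proof
        assume "y \<in> up {x}"
        then have "x \<le> y" unfolding up_def by auto
        then show False using k order.trans by blast
      qed
    qed
  qed
  moreover have "generate_topology lawson_subbasis (\<Union>{up {dbot} - up {k} | k. k \<in> KD \<and> k \<le> x})"
    apply (rule generate_topology.UN)
    using dbot_KD unfolding lawson_subbasis_def by (auto intro: generate_topology.Basis)
  ultimately show ?case using insert by (simp add: generate_topology.Int)
qed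


lemma up_up: "up (up X) = up (X::'d set)"
proof
  show "up (up X) \<subseteq> up X"
  proof
    fix x assume "x \<in> up (up X)"
    then obtain a b where "b \<in> X" "b \<le> a" "a \<le> x" unfolding up_def by auto
    then show "x \<in> up X" unfolding up_def using order.trans by blast
  qed
  show "up X \<subseteq> up (up X)" unfolding up_def using order.refl by blast
qed

lemma sat_mono: "acts \<phi> \<subseteq> Act \<Longrightarrow> x \<le> y \<Longrightarrow>
   (sat i May x \<phi> \<longrightarrow> sat i May y \<phi>) \<and> (sat i Must y \<phi> \<longrightarrow> sat i Must x \<phi>)"
proof (induction \<phi> arbitrary: x y)
  case (Dia \<alpha> \<phi>)
  then have "\<alpha> \<in> Act" by auto
  then show ?case using le_comp[OF Dia.prems(2)] by (auto simp: trans_def)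
qed auto

lemma consist: "acts \<phi> \<subseteq> Act \<Longrightarrow> sat i May x \<phi> \<Longrightarrow> sat i Must x \<phi>"
proof (induction \<phi> arbitrary: x)
  case (Neg \<phi>)
  then show ?case by auto
next
  case (Dia \<alpha> \<phi>)
  then have a: "\<alpha> \<in> Act" by auto
  from Dia obtain d' where d': "d' \<in> fst (i x \<alpha>)" "sat i May d' \<phi>" by (auto simp: trans_def)
  have "i x \<alpha> \<in> mixed_pd" using comp_in[OF a] .
  then have "fst (i x \<alpha>) = down (fst (i x \<alpha>) \<inter> snd (i x \<alpha>))" unfolding mixed_pd_def by auto
  then obtain d'' where d'': "d'' \<in> fst (i x \<alpha>)" "d'' \<in> snd (i x \<alpha>)" "d' \<le> d''"
    using d' unfolding down_def by auto
  have "sat i May d'' \<phi>" using sat_mono[of \<phi> d' d''] Dia d' d'' by auto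
  then have "sat i Must d'' \<phi>" using Dia by auto
  then show ?case using d'' by (auto simp: trans_def)
qed auto

lemma mm_in:
  assumes m: "mono (f::'d\<Rightarrow>'d)" and fin: "finite (range f)" and p: "p \<in> mixed_pd"
  shows "mixed_map f p \<in> mixed_pd"
proof -
  obtain L U where LU: "p = (L, U)" by (cases p)
  have pd: "scott_closed L" "L = down (L \<inter> U)" using p LU unfolding mixed_pd_def by auto
  have f1: "finite (f ` L)" "finite (f ` U)" "finite (f ` (L \<inter> U))"
    using fin by (auto intro: finite_subset)
  have cl: "scott_closure (f ` L) = down (f ` L)" using closure_fin f1 by auto
  have "down (f ` L) = down (down (f ` L) \<inter> up (f ` U))"
  proof
    show "down (f ` L) \<subseteq> down (down (f ` L) \<inter> up (f ` U))"
    proof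
      fix y assume "y \<in> down (f ` L)"
      then obtain x where x: "x \<in> L" "y \<le> f x" unfolding down_def by auto
      then obtain z where z: "z \<in> L" "z \<in> U" "x \<le> z" using pd(2) unfolding down_def by blast
      have "f x \<le> f z" using m z unfolding mono_def by auto
      moreover have "f z \<in> down (f ` L)" "f z \<in> up (f ` U)" using z unfolding down_def up_def by auto
      ultimately have "y \<le> f z" "f z \<in> down (f ` L) \<inter> up (f ` U)" using x(2) order.trans by blast+
      then show "y \<in> down (down (f ` L) \<inter> up (f ` U))" unfolding down_def by blast
    qed
    show "down (down (f ` L) \<inter> up (f ` U)) \<subseteq> down (f ` L)"
    proof
      fix y assume "y \<in> down (down (f ` L) \<inter> up (f ` U))"
      then obtain w x where "y \<le> w" "w \<le> f x" "x \<in> L" unfolding down_def by auto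
      then show "y \<in> down (f ` L)" unfolding down_def using order.trans by blast
    qed
  qed
  moreover have "scott_closed (down (f ` L))" using down_fin_closed f1 by auto
  moreover have "lawson_closed (up (f ` U))" using up_fin_lawson f1 by auto
  moreover have "upper (up (f ` U))" unfolding upper_def by (rule up_up)
  ultimately have A: "(down (f ` L), up (f ` U)) \<in> mixed_pd" unfolding mixed_pd_def by blast
  have B: "mixed_map f p = (down (f ` L), up (f ` U))" unfolding LU mixed_map_def using cl by simp
  show ?thesis unfolding B by (rule A)
qed

lemma pm_in: assumes "mono f" "finite (range f)" shows "prod_map Act f (i x) \<in> prod_pd Act"
  unfolding prod_map_def prod_pd_def restrict_PiE_iff
proof
  fix \<alpha> assume "\<alpha> \<in> Act"
  then show "mixed_map f (i x \<alpha>) \<in> mixed_pd" by (rule mm_in[OF assms comp_in])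
qed

lemma approx_props: "mono (approx Act i n) \<and> finite (range (approx Act i n))"
proof (induction n)
  case 0
  then show ?case by (auto simp: mono_def)
next
  case (Suc n)
  let ?f = "approx Act i n"
  have ieq: "i (approx Act i (Suc n) x) = prod_map Act ?f (i x)" for x
    using i_inv[OF pm_in] Suc by auto
  have mono: "mono (approx Act i (Suc n))"
  proof (rule monoI)
    fix x y :: 'd assume xy: "x \<le> y"
    show "approx Act i (Suc n) x \<le> approx Act i (Suc n) y"
      unfolding le_iff ieq prod_le_def mixed_le_def prod_map_def mixed_map_def
    proof (intro ballI, simp, intro conjI)
      fix \<alpha> assume a: "\<alpha> \<in> Act"
      show "scott_closure (?f ` fst (i x \<alpha>)) \<subseteq> scott_closure (?f ` fst (i y \<alpha>))"
        using le_comp[OF xy a] unfolding scott_closure_def by blast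
      show "up (?f ` snd (i y \<alpha>)) \<subseteq> up (?f ` snd (i x \<alpha>))"
        using le_comp[OF xy a] unfolding up_def by blast
    qed
  qed
  define G where "G x = (\<lambda>\<alpha>\<in>Act. (?f ` fst (i x \<alpha>), ?f ` snd (i x \<alpha>)))" for x
  define H where "H g = (\<lambda>\<alpha>\<in>Act. (scott_closure (fst (g \<alpha>)), up (snd (g \<alpha>))))" for g :: "'a \<Rightarrow> 'd set \<times> 'd set"
  have "approx Act i (Suc n) x = inv i (H (G x))" for x
    unfolding H_def G_def by (simp add: prod_map_def mixed_map_def cong: restrict_cong)
  then have "range (approx Act i (Suc n)) \<subseteq> (\<lambda>g. inv i (H g)) ` range G" by auto
  moreover have "range G \<subseteq> PiE Act (\<lambda>_. Pow (range ?f) \<times> Pow (range ?f))"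
    unfolding G_def by auto
  moreover have "finite (PiE Act (\<lambda>_. Pow (range ?f) \<times> Pow (range ?f)))"
    using Suc finAct by (intro finite_PiE) auto
  ultimately have "finite (range (approx Act i (Suc n)))"
    by (meson finite_imageI finite_subset)
  then show ?case using mono by auto
qed

lemma approx_i: "i (approx Act i (Suc n) x) = prod_map Act (approx Act i n) (i x)"
  using i_inv[OF pm_in] approx_props by auto

lemma charf: "\<exists>\<chi>. acts \<chi> \<subseteq> Act \<and> (\<forall>l. sat i May l \<chi> \<longleftrightarrow> approx Act i n z \<le> l)"
proof (induction n arbitrary: z)
  case 0
  then show ?case using dbot_le by (intro exI[of _ TT]) auto
next
  case (Suc n)
  let ?f = "approx Act i n"
  define c where "c w = (SOME \<chi>. acts \<chi> \<subseteq> Act \<and> (\<forall>l. sat i May l \<chi> \<longleftrightarrow> ?f w \<le> l))" for w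
  have c: "acts (c w) \<subseteq> Act \<and> (\<forall>l. sat i May l (c w) \<longleftrightarrow> ?f w \<le> l)" for w
    unfolding c_def by (rule someI_ex) (rule Suc.IH)
  define c2 where "c2 x = c (inv ?f (?f x))" for x
  have c2: "acts (c2 x) \<subseteq> Act \<and> (\<forall>l. sat i May l (c2 x) \<longleftrightarrow> ?f x \<le> l)" for x
    using c[of "inv ?f (?f x)"] unfolding c2_def by (simp add: f_inv_into_f)
  have fin2: "finite (c2 ` A)" for A
  proof -
    have "c2 ` A \<subseteq> (\<lambda>v. c (inv ?f v)) ` range ?f" unfolding c2_def by auto
    then show ?thesis using approx_props[of n] by (meson finite_imageI finite_subset)
  qed
  define \<phi> where "\<phi> \<alpha> = Conj (BC (Dia \<alpha> ` c2 ` fst (i z \<alpha>)))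
      (Neg (Dia \<alpha> (BC (Neg ` c2 ` snd (i z \<alpha>)))))" for \<alpha>
  define \<chi> where "\<chi> = BC (\<phi> ` Act)"
  have finphi: "finite (\<phi> ` Act)" using finAct by auto
  have "acts \<chi> \<subseteq> Act"
    unfolding \<chi>_def acts_BC[OF finphi]
  proof (intro UN_least, clarify)
    fix \<alpha> b assume a: "\<alpha> \<in> Act" "b \<in> acts (\<phi> \<alpha>)"
    have c2a: "\<And>x. acts (c2 x) \<subseteq> Act" using c2 by auto
    from a show "b \<in> Act" unfolding \<phi>_def using c2a fin2
      by (auto simp: acts_BC split: if_splits)
  qed
  moreover have "sat i May l \<chi> \<longleftrightarrow> approx Act i (Suc n) z \<le> l" for l
  proof -
    have "sat i May l \<chi> \<longleftrightarrow> (\<forall>\<alpha>\<in>Act. (\<forall>x\<in>fst (i z \<alpha>). \<exists>l'. l' \<in> fst (i l \<alpha>) \<and> ?f x \<le> l')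
          \<and> (\<forall>w\<in>snd (i l \<alpha>). \<exists>x\<in>snd (i z \<alpha>). ?f x \<le> w))"
    proof -
      have "sat i May l \<chi> \<longleftrightarrow> (\<forall>\<alpha>\<in>Act. sat i May l (\<phi> \<alpha>))"
        unfolding \<chi>_def using sat_BC[OF finphi] by simp
      moreover have "sat i May l (\<phi> \<alpha>) \<longleftrightarrow> (\<forall>x\<in>fst (i z \<alpha>). \<exists>l'. l' \<in> fst (i l \<alpha>) \<and> ?f x \<le> l')
          \<and> (\<forall>w\<in>snd (i l \<alpha>). \<exists>x\<in>snd (i z \<alpha>). ?f x \<le> w)" for \<alpha>
      proof -
        have f1: "finite (Dia \<alpha> ` c2 ` fst (i z \<alpha>))" "finite (Neg ` c2 ` snd (i z \<alpha>))"
          using fin2 by auto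
        have "sat i May l (\<phi> \<alpha>) \<longleftrightarrow> (\<forall>x\<in>fst (i z \<alpha>). \<exists>l'. l' \<in> fst (i l \<alpha>) \<and> sat i May l' (c2 x))
          \<and> \<not> (\<exists>w. w \<in> snd (i l \<alpha>) \<and> (\<forall>x\<in>snd (i z \<alpha>). \<not> sat i May w (c2 x)))"
          unfolding \<phi>_def by (simp add: sat_BC[OF f1(1)] sat_BC[OF f1(2)] trans_def)
        then show ?thesis using c2 by auto
      qed
      ultimately show ?thesis by simp
    qed
    also have "\<dots> \<longleftrightarrow> (\<forall>\<alpha>\<in>Act. scott_closure (?f ` fst (i z \<alpha>)) \<subseteq> fst (i l \<alpha>)
          \<and> snd (i l \<alpha>) \<subseteq> up (?f ` snd (i z \<alpha>)))"
    proof -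
      have "(\<forall>x\<in>fst (i z \<alpha>). \<exists>l'. l' \<in> fst (i l \<alpha>) \<and> ?f x \<le> l') \<longleftrightarrow>
            scott_closure (?f ` fst (i z \<alpha>)) \<subseteq> fst (i l \<alpha>)" if a: "\<alpha> \<in> Act" for \<alpha>
      proof -
        have "i l \<alpha> \<in> mixed_pd" by (rule comp_in[OF a])
        then have sc: "scott_closed (fst (i l \<alpha>))" unfolding mixed_pd_def by (auto split: prod.splits)
        show ?thesis unfolding closure_sub[OF sc] using sc_down[OF sc] by blast
      qed
      moreover have "(\<forall>w\<in>snd (i l \<alpha>). \<exists>x\<in>snd (i z \<alpha>). ?f x \<le> w) \<longleftrightarrow>
            snd (i l \<alpha>) \<subseteq> up (?f ` snd (i z \<alpha>))" for \<alpha>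
        unfolding up_def by auto
      ultimately show ?thesis by auto
    qed
    also have "\<dots> \<longleftrightarrow> approx Act i (Suc n) z \<le> l"
      unfolding le_iff approx_i prod_le_def mixed_le_def prod_map_def mixed_map_def by auto
    finally show ?thesis .
  qed
  ultimately show ?case by blast
qed

end

theorem lemma3p13:
  fixes Act :: "'a set" and i :: "'d::order \<Rightarrow> ('a \<Rightarrow> 'd set \<times> 'd set)" and d :: 'd
  assumes "is_initial_solution Act i"
    and "\<forall>\<phi>. acts \<phi> \<subseteq> Act \<longrightarrow> sat i Must d \<phi> \<longrightarrow> sat i May d \<phi>"
  shows "maximal d"
proof -
  interpret isol Act i using assms(1) by unfold_locales
  show ?thesis unfolding maximal_def
  proof (intro allI impI)
    fix y assume dy: "d \<le> y"
    have tr: "sat i May d \<phi>" if "acts \<phi> \<subseteq> Act" "sat i May y \<phi>" for \<phi>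
    proof (rule ccontr)
      assume "\<not> sat i May d \<phi>"
      then have "\<not> sat i Must d \<phi>" using assms(2) that by auto
      then have "\<not> sat i Must y \<phi>" using sat_mono[OF that(1) dy] by auto
      then show False using consist that by auto
    qed
    have "approx Act i n y \<le> d" for n
    proof -
      obtain \<chi> where \<chi>: "acts \<chi> \<subseteq> Act" "\<forall>l. sat i May l \<chi> \<longleftrightarrow> approx Act i n y \<le> l"
        using charf by blast
      have "approx Act i n y \<le> y" using lub[of y] unfolding is_lub_def by auto
      then have "sat i May y \<chi>" using \<chi> by auto
      then have "sat i May d \<chi>" using tr \<chi> by auto
      then show ?thesis using \<chi> by auto
    qed
    then have "y \<le> d" using lub[of y] unfolding is_lub_def by auto
    then show "y = d" using dy by auto
  qed
qed

end
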